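(* Let $\mathcal G_x$ be a matching graph with arrival distribution $(\alpha_i)$ such that a Braess paradox occurs when the edge $\{u,v\}$ ($u,v$ distinct non-adjacent nodes) is added, i.e. $\mathbb E[Q_x]<\mathbb E[\overline{Q_x}]$, where $\overline{\mathcal G_x}$ is $\mathcal G_x$ plus the edge $\{u,v\}$ and both FCFS models are stable. Let $x$ be a node distinct from $u$ and $v$, and let $\mathcal G_{yz}$ with arrival distribution $(\beta_i)$ be obtained by decomposing $x$ into $y$ and $z$, with $\beta_y,\beta_z>0$ (not necessarily equal), $\beta_y+\beta_z=\alpha_x$, and $\beta_i=\alpha_i$ for $i\ne x$. Let $\overline{\mathcal G_{yz}}$ be $\mathcal G_{yz}$ plus the edge $\{u,v\}$. Then $\mathbb E[Q_{yz}]<\mathbb E[\overline{Q_{yz}}]$, i.e. the Braess paradox also occurs for $(\mathcal G_{yz},\beta)$.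
   Context: A matching model consists of a finite connected simple graph and an arrival distribution on its nodes with positive entries. Under FCFS, the state is the word of unmatched item classes in order of arrival; an arriving item of class $i$ deletes the oldest letter of the word that is a neighbour of $i$, and if there is none $i$ is appended. For a stable model, $\mathbb E[Q]$ is the stationary mean number of items (word length). Decomposition: given a graph $\mathcal G_x=(\mathcal V,\xi)$ with node $x$, $\mathcal G_{yz}$ has node set $(\mathcal V\setminus\{x\})\cup\{y,z\}$ with $y,z$ new nodes; edges among $\mathcal V\setminus\{x\}$ are as in $\mathcal G_x$ and each of $y$ and $z$ is adjacent exactly to the neighbours of $x$ in $\mathcal G_x$ (so $y,z$ are not adjacent). $\mathbb E[Q_x],\mathbb E[\overline{Q_x}],\mathbb E[Q_{yz}],\mathbb E[\overline{Q_{yz}}]$ denote the stationary mean numbers of items for $(\mathcal G_x,\alpha)$, $(\overline{\mathcal G_x},\alpha)$, $(\mathcal G_{yz},\beta)$, $(\overline{\mathcal G_{yz}},\beta)$ respectively. *)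

theory Defs
  imports "HOL-Probability.Probability"
begin

definition simple_graph :: "'a set \<Rightarrow> 'a set set \<Rightarrow> bool" where
  "simple_graph V E \<longleftrightarrow> finite V \<and>
     (\<forall>e\<in>E. \<exists>a b. a \<in> V \<and> b \<in> V \<and> a \<noteq> b \<and> e = {a, b})"

definition connected_graph :: "'a set \<Rightarrow> 'a set set \<Rightarrow> bool" where
  "connected_graph V E \<longleftrightarrow> V \<noteq> {} \<and>
     (\<forall>a\<in>V. \<forall>b\<in>V. (a, b) \<in> {(p, q). {p, q} \<in> E}\<^sup>*)"

text \<open>FCFS dynamics: an arriving item of class i removes the oldest letter of the
  word that is a neighbour of i; if there is none, i is appended.\<close>

definition fcfs_step :: "'a set set \<Rightarrow> 'a list \<Rightarrow> 'a \<Rightarrow> 'a list" where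
  "fcfs_step E w i =
     (let p = takeWhile (\<lambda>c. {c, i} \<notin> E) w;
          r = dropWhile (\<lambda>c. {c, i} \<notin> E) w
      in if r = [] then w @ [i] else p @ tl r)"

definition valid_word :: "'a set \<Rightarrow> 'a set set \<Rightarrow> 'a list \<Rightarrow> bool" where
  "valid_word V E w \<longleftrightarrow> set w \<subseteq> V \<and>
     (\<forall>j < length w. \<forall>k < length w. {w ! j, w ! k} \<notin> E)"

definition stationary :: "'a set \<Rightarrow> 'a set set \<Rightarrow> 'a pmf \<Rightarrow> 'a list pmf \<Rightarrow> bool" where
  "stationary V E A \<pi> \<longleftrightarrow> set_pmf \<pi> \<subseteq> {w. valid_word V E w} \<and>
     bind_pmf \<pi> (\<lambda>w. map_pmf (fcfs_step E w) A) = \<pi>"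

definition matching_model :: "'a set \<Rightarrow> 'a set set \<Rightarrow> 'a pmf \<Rightarrow> bool" where
  "matching_model V E A \<longleftrightarrow> simple_graph V E \<and> connected_graph V E \<and> set_pmf A = V"

definition stable :: "'a set \<Rightarrow> 'a set set \<Rightarrow> 'a pmf \<Rightarrow> bool" where
  "stable V E A \<longleftrightarrow> matching_model V E A \<and> (\<exists>!\<pi>. stationary V E A \<pi>)"

definition mean_items :: "'a set \<Rightarrow> 'a set set \<Rightarrow> 'a pmf \<Rightarrow> ennreal" where
  "mean_items V E A =
     (\<integral>\<^sup>+ w. ennreal (real (length w)) \<partial>measure_pmf (THE \<pi>. stationary V E A \<pi>))"

definition decomp_V :: "'a set \<Rightarrow> 'a \<Rightarrow> 'a \<Rightarrow> 'a \<Rightarrow> 'a set" where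
  "decomp_V V x y z = (V - {x}) \<union> {y, z}"

definition decomp_E :: "'a set set \<Rightarrow> 'a \<Rightarrow> 'a \<Rightarrow> 'a \<Rightarrow> 'a set set" where
  "decomp_E E x y z = {e \<in> E. x \<notin> e} \<union> {{y, n} | n. {x, n} \<in> E} \<union> {{z, n} | n. {x, n} \<in> E}"

end

theory Submission
  imports Defs
begin


primrec iterK :: "'a set set \<Rightarrow> 'a pmf \<Rightarrow> nat \<Rightarrow> 'a list \<Rightarrow> 'a list pmf" where
  "iterK E B 0 a = return_pmf a"
| "iterK E B (Suc n) a = bind_pmf (map_pmf (fcfs_step E a) B) (iterK E B n)"

lemma stat_iter:
  assumes "bind_pmf \<mu> (\<lambda>w. map_pmf (fcfs_step E w) B) = \<mu>"
  shows "bind_pmf \<mu> (iterK E B n) = \<mu>"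
proof (induction n)
  case 0 then show ?case by (simp add: bind_return_pmf')
next
  case (Suc n)
  have e: "iterK E B (Suc n) = (\<lambda>a. bind_pmf (map_pmf (fcfs_step E a) B) (iterK E B n))" by (rule ext) simp
  have "bind_pmf \<mu> (iterK E B (Suc n)) = bind_pmf (bind_pmf \<mu> (\<lambda>w. map_pmf (fcfs_step E w) B)) (iterK E B n)"
    unfolding e by (simp add: bind_assoc_pmf)
  also have "... = \<mu>" using assms Suc by simp
  finally show ?case .
qed

lemma pmf_bind_ge: "pmf M x0 * pmf (N x0) i \<le> pmf (bind_pmf M N) i"
proof -
  have "ennreal (pmf M x0 * pmf (N x0) i) = (\<integral>\<^sup>+x. ennreal (pmf M x) * ennreal (pmf (N x) i) * indicator {x0} x \<partial>count_space UNIV)"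
    by (simp add: ennreal_mult)
  also have "... \<le> (\<integral>\<^sup>+x. ennreal (pmf M x) * ennreal (pmf (N x) i) \<partial>count_space UNIV)"
    by (intro nn_integral_mono) (simp split: split_indicator)
  also have "... = ennreal (pmf (bind_pmf M N) i)"
    by (simp add: ennreal_pmf_bind nn_integral_measure_pmf)
  finally show ?thesis by (simp add: ennreal_le_iff)
qed

lemma pmf_map_ge: "pmf M x \<le> pmf (map_pmf f M) (f x)"
proof -
  have "measure M {x} \<le> measure M (f -` {f x})"
    by (intro measure_pmf.finite_measure_mono) auto
  then show ?thesis by (simp add: pmf_map measure_pmf_single)
qed

lemma step_first:
  assumes "{c, i} \<in> E" shows "fcfs_step E (c # a) i = a"
  using assms by (simp add: fcfs_step_def Let_def)

lemma atom:
  assumes nb: "\<And>c. c \<in> V \<Longrightarrow> {c, nb c} \<in> E \<and> d \<le> pmf B (nb c)"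
    and "set a \<subseteq> V" and d0: "0 \<le> d"
  shows "d ^ length a \<le> pmf (iterK E B (length a) a) []"
  using assms(2)
proof (induction a)
  case Nil then show ?case by simp
next
  case (Cons c a)
  have c: "{c, nb c} \<in> E" "d \<le> pmf B (nb c)" using nb Cons.prems by auto
  have IH: "d ^ length a \<le> pmf (iterK E B (length a) a) []" using Cons by auto
  have "d * d ^ length a \<le> pmf (map_pmf (fcfs_step E (c # a)) B) a * pmf (iterK E B (length a) a) []"
  proof (rule mult_mono)
    show "d \<le> pmf (map_pmf (fcfs_step E (c # a)) B) a"
      using pmf_map_ge[of B "nb c" "fcfs_step E (c # a)"] step_first[OF c(1)] c(2) by simp
  qed (use IH d0 in auto)
  also have "... \<le> pmf (iterK E B (length (c # a)) (c # a)) []"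
    using pmf_bind_ge[of "map_pmf (fcfs_step E (c # a)) B" a "iterK E B (length a)" "[]"] by simp
  finally show ?case by simp
qed




lemma valid_set: "valid_word V E w \<Longrightarrow> set w \<subseteq> V"
  by (simp add: valid_word_def)

lemma uniq_half:
  fixes P :: "'a list \<Rightarrow> 'b list"
  assumes nbd: "\<And>c. c \<in> V \<Longrightarrow> {c, nb c} \<in> E \<and> d \<le> pmf B (nb c)" and d0: "0 < d"
    and st1: "stationary V E B \<mu>1" and st2: "stationary V E B \<mu>2"
    and len: "\<And>a. length (P a) = length a"
    and eqP: "map_pmf P \<mu>1 = map_pmf P \<mu>2"
  shows "pmf \<mu>1 a0 \<le> pmf \<mu>2 a0"
proof (cases "a0 \<in> set_pmf \<mu>1")
  case False then show ?thesis by (simp add: set_pmf_eq)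
next
  case True
  define w where "w = P a0"
  define l where "l = length a0"
  define F where "F = {a. P a = w \<and> set a \<subseteq> V}"
  have supp1: "\<And>a. a \<in> set_pmf \<mu>1 \<Longrightarrow> set a \<subseteq> V"
    using st1 by (auto simp: stationary_def valid_word_def)
  have supp2: "\<And>a. a \<in> set_pmf \<mu>2 \<Longrightarrow> set a \<subseteq> V"
    using st2 by (auto simp: stationary_def valid_word_def)
  have a0F: "a0 \<in> F" using True supp1 by (auto simp: F_def w_def)
  define f1 where "f1 a = ennreal (pmf \<mu>1 a)" for a
  define f2 where "f2 a = ennreal (pmf \<mu>2 a)" for a
  define m where "m a = min (f1 a) (f2 a)" for a
  define Kl where "Kl a c = ennreal (pmf (iterK E B l a) c)" for a c
  define D where "D = ennreal (d ^ l)"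
  define A where "A c = (\<integral>\<^sup>+a. m a * Kl a c \<partial>count_space UNIV)" for c
  have atomF: "D \<le> Kl a []" if "a \<in> F" for a
  proof -
    have "length a = l" using that len[of a] len[of a0] by (auto simp: F_def w_def l_def)
    then show ?thesis using atom[OF nbd, where a=a] that d0 by (auto simp: F_def D_def Kl_def)
  qed
  have lower: "A c + indicator {[]} c * (D * (\<integral>\<^sup>+a. indicator F a * (f a - m a) \<partial>count_space UNIV)) \<le> f c"
    if st: "stationary V E B \<mu>" and fdef: "\<And>a. f a = ennreal (pmf \<mu> a)" and mf: "\<And>a. m a \<le> f a"
    for \<mu> f c
  proof -
    have "\<mu> = bind_pmf \<mu> (iterK E B l)" using st stat_iter[of \<mu> E B l] by (simp add: stationary_def)
    then have "f c = (\<integral>\<^sup>+a. f a * Kl a c \<partial>count_space UNIV)"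
      unfolding fdef Kl_def by (metis ennreal_pmf_bind nn_integral_measure_pmf)
    also have "... = (\<integral>\<^sup>+a. m a * Kl a c + (f a - m a) * Kl a c \<partial>count_space UNIV)"
      by (intro nn_integral_cong) (metis diff_add_cancel_ennreal mf add.commute distrib_right)
    also have "... = A c + (\<integral>\<^sup>+a. (f a - m a) * Kl a c \<partial>count_space UNIV)"
      by (simp add: nn_integral_add A_def)
    finally have eqf: "f c = A c + (\<integral>\<^sup>+a. (f a - m a) * Kl a c \<partial>count_space UNIV)" .
    have "(\<integral>\<^sup>+a. (f a - m a) * Kl a c \<partial>count_space UNIV) \<ge>
        indicator {[]} c * (D * (\<integral>\<^sup>+a. indicator F a * (f a - m a) \<partial>count_space UNIV))"
    proof (cases "c = []")
      case True
      have "D * (\<integral>\<^sup>+a. indicator F a * (f a - m a) \<partial>count_space UNIV)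
          = (\<integral>\<^sup>+a. indicator F a * (f a - m a) * D \<partial>count_space UNIV)"
        by (simp add: nn_integral_cmult[symmetric] mult.commute)
      also have "... \<le> (\<integral>\<^sup>+a. (f a - m a) * Kl a c \<partial>count_space UNIV)"
        using True atomF by (intro nn_integral_mono) (auto simp: indicator_def mult_left_mono)
      finally show ?thesis using True by simp
    qed simp
    then show ?thesis by (subst eqf) (rule add_left_mono)
  qed
  have mf1: "\<And>a. m a \<le> f1 a" and mf2: "\<And>a. m a \<le> f2 a" by (auto simp: m_def)
  define \<rho>1 where "\<rho>1 = (\<integral>\<^sup>+a. indicator F a * (f1 a - m a) \<partial>count_space UNIV)"
  define \<rho>2 where "\<rho>2 = (\<integral>\<^sup>+a. indicator F a * (f2 a - m a) \<partial>count_space UNIV)"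
  have massF: "(\<integral>\<^sup>+a. indicator F a * f a \<partial>count_space UNIV) = emeasure (map_pmf P \<mu>) {w}"
    if st: "stationary V E B \<mu>" and fdef: "\<And>a. f a = ennreal (pmf \<mu> a)" for \<mu> f
  proof -
    have supp: "\<And>a. a \<in> set_pmf \<mu> \<Longrightarrow> set a \<subseteq> V"
      using st by (auto simp: stationary_def valid_word_def)
    have "(\<integral>\<^sup>+a. indicator F a * f a \<partial>count_space UNIV) = (\<integral>\<^sup>+a. f a \<partial>count_space F)"
      by (simp add: nn_integral_count_space_indicator mult.commute)
    also have "... = emeasure \<mu> F" by (simp add: fdef nn_integral_pmf)
    also have "... = emeasure \<mu> (F \<inter> set_pmf \<mu>)" by (simp add: emeasure_Int_set_pmf)
    also have "F \<inter> set_pmf \<mu> = P -` {w} \<inter> set_pmf \<mu>" using supp by (auto simp: F_def)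
    also have "emeasure \<mu> (P -` {w} \<inter> set_pmf \<mu>) = emeasure (map_pmf P \<mu>) {w}"
      by (simp add: emeasure_Int_set_pmf)
    finally show ?thesis .
  qed
  have split: "(\<integral>\<^sup>+a. indicator F a * f a \<partial>count_space UNIV) =
      (\<integral>\<^sup>+a. indicator F a * m a \<partial>count_space UNIV) + (\<integral>\<^sup>+a. indicator F a * (f a - m a) \<partial>count_space UNIV)"
    if mf: "\<And>a. m a \<le> f a" for f
    by (subst nn_integral_add[symmetric]) (auto intro!: nn_integral_cong simp: distrib_left[symmetric],
        metis diff_add_cancel_ennreal mf add.commute)
  have mfin: "(\<integral>\<^sup>+a. indicator F a * m a \<partial>count_space UNIV) \<noteq> \<infinity>"
  proof -
    have "(\<integral>\<^sup>+a. indicator F a * m a \<partial>count_space UNIV) \<le> (\<integral>\<^sup>+a. f1 a \<partial>count_space UNIV)"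
      using mf1 by (intro nn_integral_mono) (auto simp: indicator_def)
    also have "... = 1" by (simp add: f1_def nn_integral_pmf)
    finally show ?thesis by (auto simp: top_unique)
  qed
  have "\<rho>1 = \<rho>2"
    using split[OF mf1] split[OF mf2] massF[OF st1 f1_def] massF[OF st2 f2_def] eqP mfin
    unfolding \<rho>1_def \<rho>2_def by (metis ennreal_add_left_cancel)
  have low: "A c + indicator {[]} c * (D * \<rho>1) \<le> m c" for c
    using lower[OF st1 f1_def mf1, of c] lower[OF st2 f2_def mf2, of c] \<open>\<rho>1 = \<rho>2\<close>
    unfolding \<rho>1_def \<rho>2_def m_def by simp
  define M where "M = (\<integral>\<^sup>+c. m c \<partial>count_space UNIV)"
  have Mfin: "M \<noteq> \<infinity>"
  proof -
    have "M \<le> (\<integral>\<^sup>+a. f1 a \<partial>count_space UNIV)"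
      unfolding M_def using mf1 by (intro nn_integral_mono) auto
    also have "... = 1" by (simp add: f1_def nn_integral_pmf)
    finally show ?thesis by (auto simp: top_unique)
  qed
  have sumA: "(\<integral>\<^sup>+c. A c \<partial>count_space UNIV) = M"
  proof -
    define S where "S = set_pmf \<mu>1"
    have m0: "m a = 0" if "a \<notin> S" for a
      using that by (simp add: S_def m_def f1_def set_pmf_eq)
    have "A c = (\<integral>\<^sup>+a. m a * Kl a c \<partial>count_space S)" for c
      unfolding A_def using m0
      by (subst nn_integral_count_space_indicator) (auto intro!: nn_integral_cong simp: indicator_def)
    then have "(\<integral>\<^sup>+c. A c \<partial>count_space UNIV) =
        (\<integral>\<^sup>+c. \<integral>\<^sup>+a. m a * Kl a c \<partial>count_space S \<partial>count_space UNIV)" by simp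
    also have "... = (\<integral>\<^sup>+a. \<integral>\<^sup>+c. m a * Kl a c \<partial>count_space UNIV \<partial>count_space S)"
      by (rule nn_integral_count_space_nn_integral) (auto simp: S_def)
    also have "... = (\<integral>\<^sup>+a. m a \<partial>count_space S)"
      by (simp add: nn_integral_cmult Kl_def nn_integral_pmf)
    also have "... = M" unfolding M_def using m0
      by (subst nn_integral_count_space_indicator) (auto intro!: nn_integral_cong simp: indicator_def)
    finally show ?thesis .
  qed
  have "M + D * \<rho>1 \<le> M"
  proof -
    have "(\<integral>\<^sup>+c. A c + indicator {[]} c * (D * \<rho>1) \<partial>count_space UNIV) \<le> M"
      unfolding M_def by (intro nn_integral_mono low)
    moreover have "(\<integral>\<^sup>+c. A c + indicator {[]} c * (D * \<rho>1) \<partial>count_space UNIV) = M + D * \<rho>1"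
      by (simp add: nn_integral_add sumA nn_integral_cmult mult.commute)
    ultimately show ?thesis by simp
  qed
  then have "D * \<rho>1 = 0" using Mfin
    by (metis add.right_neutral antisym ennreal_add_left_cancel_le zero_le)
  moreover have "D \<noteq> 0" using d0 by (simp add: D_def)
  ultimately have "\<rho>1 = 0" by simp
  then have "\<forall>a\<in>UNIV. indicator F a * (f1 a - m a) = 0"
    unfolding \<rho>1_def by (simp add: nn_integral_0_iff_AE AE_count_space)
  then have "f1 a0 - m a0 = 0" using a0F by (metis UNIV_I indicator_simps(1) mult_1)
  then have "f1 a0 \<le> f2 a0" by (simp add: m_def diff_eq_0_iff_ennreal)
  then show ?thesis by (simp add: f1_def f2_def)
qed


lemma uniq_generic:
  fixes P :: "'a list \<Rightarrow> 'b list"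
  assumes finV: "finite V" and nb: "\<And>c. c \<in> V \<Longrightarrow> {c, nb c} \<in> E \<and> 0 < pmf B (nb c)"
    and st1: "stationary V E B \<mu>1" and st2: "stationary V E B \<mu>2"
    and len: "\<And>a. length (P a) = length a"
    and eqP: "map_pmf P \<mu>1 = map_pmf P \<mu>2"
  shows "\<mu>1 = \<mu>2"
proof -
  define d where "d = (if V = {} then 1 else Min ((\<lambda>c. pmf B (nb c)) ` V))"
  have d0: "0 < d" using finV nb by (auto simp: d_def)
  have nbd: "\<And>c. c \<in> V \<Longrightarrow> {c, nb c} \<in> E \<and> d \<le> pmf B (nb c)"
    using finV nb by (auto simp: d_def)
  show ?thesis
  proof (rule pmf_eqI)
    fix i
    show "pmf \<mu>1 i = pmf \<mu>2 i"
      using uniq_half[OF nbd d0 st1 st2 len eqP] uniq_half[OF nbd d0 st2 st1 len eqP[symmetric]]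
      by (meson antisym)
  qed
qed




lemma step_G: "fcfs_step E xs i = (let j = length (takeWhile (\<lambda>c. {c, i} \<notin> E) xs) in
   if j = length xs then xs @ [i] else take j xs @ drop (Suc j) xs)"
proof -
  define j where "j = length (takeWhile (\<lambda>c. {c, i} \<notin> E) xs)"
  have t: "takeWhile (\<lambda>c. {c, i} \<notin> E) xs = take j xs" unfolding j_def by (rule takeWhile_eq_take)
  have d: "dropWhile (\<lambda>c. {c, i} \<notin> E) xs = drop j xs" unfolding j_def by (rule dropWhile_eq_drop)
  have jl: "j \<le> length xs" unfolding j_def by (rule length_takeWhile_le)
  show ?thesis unfolding fcfs_step_def Let_def t d j_def[symmetric]
    using jl by (auto simp: tl_drop drop_Suc)
qed

primrec liftL :: "('a \<Rightarrow> 'a pmf) \<Rightarrow> 'a list \<Rightarrow> 'a list pmf" where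
  "liftL L [] = return_pmf []"
| "liftL L (c # w) = bind_pmf (L c) (\<lambda>l. map_pmf (Cons l) (liftL L w))"

lemma liftL_del: "j < length w \<Longrightarrow>
  map_pmf (\<lambda>a. take j a @ drop (Suc j) a) (liftL L w) = liftL L (take j w @ drop (Suc j) w)"
proof (induction w arbitrary: j)
  case Nil then show ?case by simp
next
  case (Cons c w)
  show ?case
  proof (cases j)
    case 0 then show ?thesis by (simp add: map_bind_pmf map_pmf_comp o_def)
  next
    case (Suc j')
    then have "j' < length w" using Cons by simp
    then show ?thesis using Suc Cons.IH[of j'] by (simp add: map_bind_pmf map_pmf_comp o_def
          flip: Cons.IH[of j'])
  qed
qed

lemma liftL_snoc: "liftL L (w @ [i]) = bind_pmf (liftL L w) (\<lambda>a. map_pmf (\<lambda>l. a @ [l]) (L i))"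
proof (induction w)
  case Nil then show ?case by (simp add: bind_return_pmf map_bind_pmf map_pmf_comp o_def bind_return_pmf'
      flip: map_pmf_def)
next
  case (Cons c w)
  then show ?case by (simp add: map_bind_pmf bind_map_pmf map_pmf_comp o_def bind_assoc_pmf)
qed

locale lift =
  fixes V :: "'a set" and E :: "'a set set" and V' :: "'a set" and E' :: "'a set set"
    and proj :: "'a \<Rightarrow> 'a" and \<alpha> \<beta> :: "'a pmf" and L :: "'a \<Rightarrow> 'a pmf"
  assumes edges: "\<And>c d. c \<in> V' \<Longrightarrow> d \<in> V' \<Longrightarrow> ({c, d} \<in> E') = ({proj c, proj d} \<in> E)"
    and projV: "\<And>c. c \<in> V' \<Longrightarrow> proj c \<in> V"
    and liftI: "\<And>i. i \<in> V \<Longrightarrow> set_pmf (L i) \<subseteq> V' \<inter> proj -` {i}"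
    and beta: "\<beta> = bind_pmf \<alpha> L"
    and alpha: "set_pmf \<alpha> \<subseteq> V"
begin

lemma step_lift:
  assumes a: "set a \<subseteq> V'" and i: "i' \<in> V'"
  shows "fcfs_step E' a i' = (let j = length (takeWhile (\<lambda>c. {c, proj i'} \<notin> E) (map proj a)) in
   if j = length a then a @ [i'] else take j a @ drop (Suc j) a)"
proof -
  have "takeWhile (\<lambda>c. {c, i'} \<notin> E') a = takeWhile (\<lambda>c. {proj c, proj i'} \<notin> E) a"
    using a i edges by (intro takeWhile_cong) auto
  then have "length (takeWhile (\<lambda>c. {c, i'} \<notin> E') a) = length (takeWhile (\<lambda>c. {c, proj i'} \<notin> E) (map proj a))"
    by (simp add: takeWhile_map o_def)
  then show ?thesis by (simp add: step_G[of E' a i'] Let_def)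
qed

lemma proj_step:
  assumes a: "set a \<subseteq> V'" and i: "i' \<in> V'"
  shows "map proj (fcfs_step E' a i') = fcfs_step E (map proj a) (proj i')"
  using step_lift[OF a i] by (simp add: step_G[of E "map proj a"] Let_def take_map drop_map)

lemma valid_proj: "valid_word V' E' a \<Longrightarrow> valid_word V E (map proj a)"
  unfolding valid_word_def using projV edges by (auto simp: subset_iff)

lemma alpha_eq: "map_pmf proj \<beta> = \<alpha>"
proof -
  have "map_pmf proj \<beta> = bind_pmf \<alpha> (\<lambda>i. map_pmf proj (L i))" by (simp add: beta map_bind_pmf)
  also have "... = bind_pmf \<alpha> return_pmf"
  proof (intro bind_pmf_cong refl)
    fix i assume "i \<in> set_pmf \<alpha>"
    then have "i \<in> V" using alpha by auto
    then have "map_pmf proj (L i) = map_pmf (\<lambda>_. i) (L i)"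
      using liftI by (intro map_pmf_cong) auto
    then show "map_pmf proj (L i) = return_pmf i" by simp
  qed
  finally show ?thesis by (simp add: bind_return_pmf')
qed

lemma beta_supp: "set_pmf \<beta> \<subseteq> V'"
  using liftI alpha by (auto simp: beta)

lemma stat_proj:
  assumes st: "stationary V' E' \<beta> \<mu>"
  shows "stationary V E \<alpha> (map_pmf (map proj) \<mu>)"
  unfolding stationary_def
proof
  show "set_pmf (map_pmf (map proj) \<mu>) \<subseteq> {w. valid_word V E w}"
    using st valid_proj by (auto simp: stationary_def)
  have "bind_pmf (map_pmf (map proj) \<mu>) (\<lambda>w. map_pmf (fcfs_step E w) \<alpha>)
     = bind_pmf \<mu> (\<lambda>a. map_pmf (fcfs_step E (map proj a)) (map_pmf proj \<beta>))"
    by (simp add: bind_map_pmf alpha_eq)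
  also have "... = bind_pmf \<mu> (\<lambda>a. map_pmf (map proj) (map_pmf (fcfs_step E' a) \<beta>))"
  proof (intro bind_pmf_cong refl)
    fix a assume "a \<in> set_pmf \<mu>"
    then have a: "set a \<subseteq> V'" using st by (auto simp: stationary_def valid_word_def)
    show "map_pmf (fcfs_step E (map proj a)) (map_pmf proj \<beta>) = map_pmf (map proj) (map_pmf (fcfs_step E' a) \<beta>)"
      unfolding map_pmf_comp using proj_step[OF a] beta_supp by (intro map_pmf_cong) auto
  qed
  also have "... = map_pmf (map proj) (bind_pmf \<mu> (\<lambda>a. map_pmf (fcfs_step E' a) \<beta>))"
    by (simp add: map_bind_pmf)
  also have "... = map_pmf (map proj) \<mu>" using st by (simp add: stationary_def)
  finally show "bind_pmf (map_pmf (map proj) \<mu>) (\<lambda>w. map_pmf (fcfs_step E w) \<alpha>) = map_pmf (map proj) \<mu>" .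
qed

lemma supp_liftL: "set w \<subseteq> V \<Longrightarrow> a \<in> set_pmf (liftL L w) \<Longrightarrow> map proj a = w \<and> set a \<subseteq> V'"
proof (induction w arbitrary: a)
  case Nil then show ?case by simp
next
  case (Cons c w)
  then show ?case using liftI[of c] by (auto simp: subset_iff)
qed

lemma valid_lift: "valid_word V E w \<Longrightarrow> a \<in> set_pmf (liftL L w) \<Longrightarrow> valid_word V' E' a"
proof -
  assume v: "valid_word V E w" and a: "a \<in> set_pmf (liftL L w)"
  then have pa: "map proj a = w" and sa: "set a \<subseteq> V'" using supp_liftL valid_set by blast+
  show ?thesis unfolding valid_word_def
  proof (intro conjI sa allI impI)
    fix j k assume "j < length a" "k < length a"
    then show "{a ! j, a ! k} \<notin> E'" using v pa sa edges[of "a ! j" "a ! k"]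
      by (auto simp: valid_word_def) (metis nth_map nth_mem subsetD length_map)
  qed
qed

lemma commute:
  assumes w: "set w \<subseteq> V" and i: "i \<in> V"
  shows "bind_pmf (liftL L w) (\<lambda>a. map_pmf (fcfs_step E' a) (L i)) = liftL L (fcfs_step E w i)"
proof -
  define j where "j = length (takeWhile (\<lambda>c. {c, i} \<notin> E) w)"
  have st: "fcfs_step E' a i' = (if j = length w then a @ [i'] else take j a @ drop (Suc j) a)"
    if "a \<in> set_pmf (liftL L w)" "i' \<in> set_pmf (L i)" for a i'
  proof -
    have a: "map proj a = w" "set a \<subseteq> V'" using supp_liftL[OF w that(1)] by auto
    have i': "i' \<in> V'" "proj i' = i" using liftI[OF i] that(2) by auto
    have "length a = length w" using a(1) by auto
    then show ?thesis using step_lift[OF a(2) i'(1)] a i' by (simp add: j_def Let_def)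
  qed
  have "bind_pmf (liftL L w) (\<lambda>a. map_pmf (fcfs_step E' a) (L i)) =
     bind_pmf (liftL L w) (\<lambda>a. map_pmf (\<lambda>i'. if j = length w then a @ [i'] else take j a @ drop (Suc j) a) (L i))"
    using st by (intro bind_pmf_cong refl map_pmf_cong) auto
  also have "... = liftL L (fcfs_step E w i)"
  proof (cases "j = length w")
    case True
    then show ?thesis by (simp add: step_G[of E w i] j_def[symmetric] liftL_snoc)
  next
    case False
    then have "j < length w" unfolding j_def using length_takeWhile_le le_neq_implies_less by blast
    then show ?thesis using False
      by (simp add: step_G[of E w i] j_def[symmetric] liftL_del[symmetric] map_pmf_def)
  qed
  finally show ?thesis .
qed

lemma stat_lift:
  assumes st: "stationary V E \<alpha> \<pi>"
  shows "stationary V' E' \<beta> (bind_pmf \<pi> (liftL L))"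
  unfolding stationary_def
proof
  show "set_pmf (bind_pmf \<pi> (liftL L)) \<subseteq> {w. valid_word V' E' w}"
    using st valid_lift by (auto simp: stationary_def)
  have "bind_pmf (bind_pmf \<pi> (liftL L)) (\<lambda>w. map_pmf (fcfs_step E' w) \<beta>)
      = bind_pmf \<pi> (\<lambda>w. bind_pmf \<alpha> (\<lambda>i. bind_pmf (liftL L w) (\<lambda>a. map_pmf (fcfs_step E' a) (L i))))"
    by (simp add: bind_assoc_pmf beta map_bind_pmf bind_commute_pmf[of "liftL L _" \<alpha>])
  also have "... = bind_pmf \<pi> (\<lambda>w. bind_pmf \<alpha> (\<lambda>i. liftL L (fcfs_step E w i)))"
  proof (intro bind_pmf_cong refl)
    fix w i assume "w \<in> set_pmf \<pi>" "i \<in> set_pmf \<alpha>"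
    moreover have "set w \<subseteq> V" using st \<open>w \<in> set_pmf \<pi>\<close> by (auto simp: stationary_def valid_word_def)
    ultimately show "bind_pmf (liftL L w) (\<lambda>a. map_pmf (fcfs_step E' a) (L i)) = liftL L (fcfs_step E w i)"
      using alpha commute by auto
  qed
  also have "... = bind_pmf (bind_pmf \<pi> (\<lambda>w. map_pmf (fcfs_step E w) \<alpha>)) (liftL L)"
    by (simp add: bind_assoc_pmf bind_map_pmf)
  also have "... = bind_pmf \<pi> (liftL L)" using st by (simp add: stationary_def)
  finally show "bind_pmf (bind_pmf \<pi> (liftL L)) (\<lambda>w. map_pmf (fcfs_step E' w) \<beta>) = bind_pmf \<pi> (liftL L)" .
qed

end



lemma pmf_bind_single:
  assumes "\<And>j. j \<in> set_pmf M \<Longrightarrow> pmf (N j) i = (if j = j0 then c else 0)" and "0 \<le> c"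
  shows "pmf (bind_pmf M N) i = pmf M j0 * c"
proof -
  have "ennreal (pmf (bind_pmf M N) i) = (\<integral>\<^sup>+j. ennreal c * indicator {j0} j \<partial>measure_pmf M)"
    unfolding ennreal_pmf_bind using assms
    by (intro nn_integral_cong_AE) (auto simp: AE_measure_pmf_iff indicator_def)
  also have "... = ennreal (pmf M j0 * c)"
    using assms(2) by (simp add: emeasure_pmf_single ennreal_mult mult.commute)
  finally show ?thesis using assms by (simp add: ennreal_inj)
qed

lemma neighbour_exists:
  assumes "simple_graph V E" "connected_graph V E" "c \<in> V" "d \<in> V" "d \<noteq> c"
  shows "\<exists>n. {c, n} \<in> E \<and> n \<in> V"
proof -
  have "(c, d) \<in> {(p, q). {p, q} \<in> E}\<^sup>*" using assms by (auto simp: connected_graph_def)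
  then obtain n where "{c, n} \<in> E" using assms(5) by (auto elim: converse_rtranclE)
  moreover then have "n \<in> V" using assms(1) unfolding simple_graph_def
    by (metis doubleton_eq_iff insertI1 insert_commute)
  ultimately show ?thesis by blast
qed

lemma simple_edge: "simple_graph V E \<Longrightarrow> {a, b} \<in> E \<Longrightarrow> a \<in> V \<and> b \<in> V \<and> a \<noteq> b"
  unfolding simple_graph_def by (metis doubleton_eq_iff)

lemma decomp_edges:
  assumes sg: "simple_graph V E" and x: "x \<in> V" and yz: "y \<notin> V" "z \<notin> V" "y \<noteq> z"
    and c: "c \<in> decomp_V V x y z" and d: "d \<in> decomp_V V x y z"
  defines "proj \<equiv> \<lambda>c. if c = y \<or> c = z then x else c"
  shows "({c, d} \<in> decomp_E E x y z) = ({proj c, proj d} \<in> E)"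
proof -
  have xx: "{x, x} \<notin> E" using simple_edge[OF sg, of x x] by auto
  have nY: "{y, n} \<notin> E" "{z, n} \<notin> E" for n using simple_edge[OF sg] yz by auto
  show ?thesis
    using c d x yz xx nY simple_edge[OF sg]
    unfolding decomp_E_def decomp_V_def proj_def
    by (auto simp: doubleton_eq_iff insert_commute)
qed




lemma decomp_main:
  assumes stab: "stable V E \<alpha>" and x: "x \<in> V" and w: "w \<in> V" "w \<noteq> x"
    and yz: "y \<notin> V" "z \<notin> V" "y \<noteq> z"
    and bs: "set_pmf \<beta> = decomp_V V x y z"
    and byz: "pmf \<beta> y > 0" "pmf \<beta> z > 0" "pmf \<beta> y + pmf \<beta> z = pmf \<alpha> x"
    and bo: "\<And>i. i \<in> V \<Longrightarrow> i \<noteq> x \<Longrightarrow> pmf \<beta> i = pmf \<alpha> i"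
  shows "stable (decomp_V V x y z) (decomp_E E x y z) \<beta> \<and>
     mean_items (decomp_V V x y z) (decomp_E E x y z) \<beta> = mean_items V E \<alpha>"
proof -
  have mm: "matching_model V E \<alpha>" and ex1: "\<exists>!\<pi>. stationary V E \<alpha> \<pi>"
    using stab by (auto simp: stable_def)
  have sg: "simple_graph V E" and cg: "connected_graph V E" and sa: "set_pmf \<alpha> = V"
    using mm by (auto simp: matching_model_def)
  have finV: "finite V" using sg by (simp add: simple_graph_def)
  define V' where "V' = decomp_V V x y z"
  define E' where "E' = decomp_E E x y z"
  define proj where "proj = (\<lambda>c. if c = y \<or> c = z then x else c)"
  define q where "q = pmf \<beta> y / pmf \<alpha> x"
  define f where "f = (\<lambda>b. if b then y else z)"
  define L where "L = (\<lambda>i. if i = x then map_pmf f (bernoulli_pmf q) else return_pmf i)"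
  have ax: "pmf \<alpha> x > 0" using x sa by (metis pmf_positive)
  have q0: "0 \<le> q" and q1: "q \<le> 1" using byz ax by (auto simp: q_def)
  have q2: "1 - q = pmf \<beta> z / pmf \<alpha> x" using byz ax by (auto simp: q_def field_simps)
  have injf: "inj f" using yz by (auto simp: f_def inj_def split: if_splits)
  have setL: "set_pmf (L x) \<subseteq> {y, z}" by (auto simp: L_def f_def)
  have edges: "\<And>c d. c \<in> V' \<Longrightarrow> d \<in> V' \<Longrightarrow> ({c, d} \<in> E') = ({proj c, proj d} \<in> E)"
    unfolding V'_def E'_def proj_def by (rule decomp_edges[OF sg x yz])
  have V'eq: "V' = (V - {x}) \<union> {y, z}" by (simp add: V'_def decomp_V_def)
  have beta: "\<beta> = bind_pmf \<alpha> L"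
  proof (rule pmf_eqI)
    fix i
    show "pmf \<beta> i = pmf (bind_pmf \<alpha> L) i"
    proof (cases "i \<in> V \<and> i \<noteq> x")
      case True
      have "pmf (bind_pmf \<alpha> L) i = pmf \<alpha> i * 1"
      proof (rule pmf_bind_single)
        fix j assume "j \<in> set_pmf \<alpha>"
        show "pmf (L j) i = (if j = i then 1 else 0)"
        proof (cases "j = x")
          case True
          then have "i \<notin> set_pmf (L j)" using setL \<open>i \<in> V \<and> i \<noteq> x\<close> yz by auto
          then show ?thesis using True \<open>i \<in> V \<and> i \<noteq> x\<close> by (auto simp: set_pmf_iff)
        qed (auto simp: L_def)
      qed simp
      then show ?thesis using bo True by simp
    next
      case notV: False
      show ?thesis
      proof (cases "i = y")
        case True
        have "pmf (bind_pmf \<alpha> L) i = pmf \<alpha> x * q"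
        proof (rule pmf_bind_single)
          fix j assume "j \<in> set_pmf \<alpha>"
          then have "j \<in> V" using sa by simp
          show "pmf (L j) i = (if j = x then q else 0)"
          proof (cases "j = x")
            case True
            then show ?thesis using pmf_map_inj'[OF injf, of "bernoulli_pmf q" True] q0 q1 \<open>i = y\<close>
              by (simp add: L_def f_def)
          qed (use \<open>j \<in> V\<close> yz \<open>i = y\<close> in \<open>auto simp: L_def indicator_def\<close>)
        qed (simp add: q0)
        then show ?thesis using True ax by (simp add: q_def)
      next
        case ny: False
        show ?thesis
        proof (cases "i = z")
          case True
          have "pmf (bind_pmf \<alpha> L) i = pmf \<alpha> x * (1 - q)"
          proof (rule pmf_bind_single)
            fix j assume "j \<in> set_pmf \<alpha>"
            then have "j \<in> V" using sa by simp
            show "pmf (L j) i = (if j = x then 1 - q else 0)"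
            proof (cases "j = x")
              case True
              then show ?thesis using pmf_map_inj'[OF injf, of "bernoulli_pmf q" False] q0 q1 \<open>i = z\<close>
                by (simp add: L_def f_def)
            qed (use \<open>j \<in> V\<close> yz \<open>i = z\<close> in \<open>auto simp: L_def indicator_def\<close>)
          qed (simp add: q1)
          then show ?thesis using True ax by (simp add: q2)
        next
          case nz: False
          have "i \<notin> set_pmf \<beta>" using bs notV ny nz by (auto simp: decomp_V_def)
          moreover have "pmf (bind_pmf \<alpha> L) i = pmf \<alpha> x * 0"
          proof (rule pmf_bind_single)
            fix j assume "j \<in> set_pmf \<alpha>"
            then have "j \<in> V" using sa by simp
            show "pmf (L j) i = (if j = x then 0 else 0)"
            proof (cases "j = x")
              case True
              then have "i \<notin> set_pmf (L j)" using setL ny nz by auto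
              then show ?thesis by (simp add: set_pmf_iff)
            qed (use \<open>j \<in> V\<close> notV in \<open>auto simp: L_def indicator_def\<close>)
          qed simp
          ultimately show ?thesis by (simp add: set_pmf_iff)
        qed
      qed
    qed
  qed
  interpret l: lift V E V' E' proj \<alpha> \<beta> L
  proof
    show "\<And>c d. c \<in> V' \<Longrightarrow> d \<in> V' \<Longrightarrow> ({c, d} \<in> E') = ({proj c, proj d} \<in> E)" by (rule edges)
    show "\<And>c. c \<in> V' \<Longrightarrow> proj c \<in> V" using x by (auto simp: V'eq proj_def)
    show "\<And>i. i \<in> V \<Longrightarrow> set_pmf (L i) \<subseteq> V' \<inter> proj -` {i}"
      using setL yz by (auto simp: L_def V'eq proj_def)
    show "\<beta> = bind_pmf \<alpha> L" by (rule beta)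
    show "set_pmf \<alpha> \<subseteq> V" using sa by simp
  qed
  have yV': "y \<in> V'" and zV': "z \<in> V'" by (auto simp: V'eq)
  have proj_same: "proj c = c" if "c \<in> V" for c using that yz by (auto simp: proj_def)
  have sg': "simple_graph V' E'"
    unfolding simple_graph_def
  proof (intro conjI ballI)
    show "finite V'" using finV by (simp add: V'eq)
    fix e assume "e \<in> E'"
    then consider "e \<in> E" "x \<notin> e" | n where "e = {y, n}" "{x, n} \<in> E" | n where "e = {z, n}" "{x, n} \<in> E"
      by (auto simp: E'_def decomp_E_def)
    then show "\<exists>a b. a \<in> V' \<and> b \<in> V' \<and> a \<noteq> b \<and> e = {a, b}"
    proof cases
      case 1
      then obtain a b where "a \<in> V" "b \<in> V" "a \<noteq> b" "e = {a, b}" using sg 1 unfolding simple_graph_def by blast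
      then show ?thesis using 1 by (auto simp: V'eq)
    next
      case (2 n)
      then have "n \<in> V" "n \<noteq> x" using simple_edge[OF sg 2(2)] by auto
      then show ?thesis using 2 yz by (intro exI[of _ y] exI[of _ n]) (auto simp: V'eq)
    next
      case (3 n)
      then have "n \<in> V" "n \<noteq> x" using simple_edge[OF sg 3(2)] by auto
      then show ?thesis using 3 yz by (intro exI[of _ z] exI[of _ n]) (auto simp: V'eq)
    qed
  qed
  define R' where "R' = {(p, q). {p, q} \<in> E'}"
  define g where "g = (\<lambda>c. if c = x then y else c)"
  have gV: "g c \<in> V'" "proj (g c) = c" if "c \<in> V" for c
    using that yz by (auto simp: g_def V'eq proj_def)
  have gstep: "(g a, g b) \<in> R'\<^sup>*" if "(a, b) \<in> {(p, q). {p, q} \<in> E}\<^sup>*" "a \<in> V" for a b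
    using that(1)
  proof (induction rule: rtrancl_induct)
    case base then show ?case by simp
  next
    case (step b c)
    then have bc: "{b, c} \<in> E" by simp
    then have "b \<in> V" "c \<in> V" using simple_edge[OF sg] by auto
    then have "(g b, g c) \<in> R'" using edges[of "g b" "g c"] gV bc by (simp add: R'_def)
    then show ?case using step.IH by (meson rtrancl_into_rtrancl)
  qed
  have symR: "sym (R'\<^sup>*)" by (rule sym_rtrancl) (auto simp: R'_def sym_def insert_commute)
  obtain n where n: "{x, n} \<in> E" "n \<in> V" using neighbour_exists[OF sg cg x w] by blast
  have nx: "n \<noteq> x" using simple_edge[OF sg n(1)] by blast
  have nV': "n \<in> V'" using n nx by (auto simp: V'eq)
  have zn: "(z, n) \<in> R'" using edges[OF zV' nV'] n nx proj_same[OF n(2)] by (simp add: R'_def proj_def)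
  have ny: "(n, y) \<in> R'" using edges[OF nV' yV'] n nx proj_same[OF n(2)]
    by (simp add: R'_def proj_def insert_commute)
  have bck: "(c, g (proj c)) \<in> R'\<^sup>*" if "c \<in> V'" for c
  proof (cases "c = z")
    case True
    then have "g (proj c) = y" using yz by (simp add: g_def proj_def)
    then show ?thesis using True zn ny by (meson converse_rtrancl_into_rtrancl r_into_rtrancl)
  next
    case False
    then have "g (proj c) = c" using that yz by (auto simp: g_def proj_def V'eq)
    then show ?thesis by simp
  qed
  have cg': "connected_graph V' E'"
    unfolding connected_graph_def R'_def[symmetric]
  proof (intro conjI ballI)
    show "V' \<noteq> {}" using yV' by auto
    fix a b assume a: "a \<in> V'" and b: "b \<in> V'"
    have pa: "proj a \<in> V" and pb: "proj b \<in> V" using a b l.projV by auto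
    have "(proj a, proj b) \<in> {(p, q). {p, q} \<in> E}\<^sup>*" using cg pa pb by (auto simp: connected_graph_def)
    then have 1: "(g (proj a), g (proj b)) \<in> R'\<^sup>*" using gstep pa by blast
    have 2: "(g (proj b), b) \<in> R'\<^sup>*" using bck[OF b] symR by (auto simp: sym_def)
    show "(a, b) \<in> R'\<^sup>*" using bck[OF a] 1 2 by (meson rtrancl_trans)
  qed
  have bs': "set_pmf \<beta> = V'" using bs by (simp add: V'_def)
  have mm': "matching_model V' E' \<beta>" using sg' cg' bs' by (simp add: matching_model_def)
  define nb where "nb c = (SOME n. {c, n} \<in> E' \<and> n \<in> V')" for c
  have nb: "{c, nb c} \<in> E' \<and> 0 < pmf \<beta> (nb c)" if "c \<in> V'" for c
  proof -
    obtain d where "d \<in> V'" "d \<noteq> c" using yV' zV' yz by metis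
    then have "\<exists>n. {c, n} \<in> E' \<and> n \<in> V'" using neighbour_exists[OF sg' cg' that] by blast
    then have "{c, nb c} \<in> E' \<and> nb c \<in> V'" unfolding nb_def by (rule someI_ex)
    then show ?thesis using bs' by (simp add: pmf_positive)
  qed
  have finV': "finite V'" using sg' by (simp add: simple_graph_def)
  obtain \<pi> where st\<pi>: "stationary V E \<alpha> \<pi>" and u\<pi>: "\<And>\<pi>'. stationary V E \<alpha> \<pi>' \<Longrightarrow> \<pi>' = \<pi>"
    using ex1 by blast
  have ustat: "\<mu>1 = \<mu>2" if "stationary V' E' \<beta> \<mu>1" "stationary V' E' \<beta> \<mu>2" for \<mu>1 \<mu>2
  proof (rule uniq_generic[OF finV' nb that, where P = "map proj"])
    show "\<And>a. length (map proj a) = length a" by simp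
    show "map_pmf (map proj) \<mu>1 = map_pmf (map proj) \<mu>2"
      using u\<pi> l.stat_proj that by metis
  qed auto
  have ex1': "\<exists>!\<mu>. stationary V' E' \<beta> \<mu>"
    using l.stat_lift[OF st\<pi>] ustat by blast
  have stab': "stable V' E' \<beta>" using mm' ex1' by (simp add: stable_def)
  define \<mu> where "\<mu> = (THE \<mu>. stationary V' E' \<beta> \<mu>)"
  have st\<mu>: "stationary V' E' \<beta> \<mu>" unfolding \<mu>_def using ex1' by (rule theI')
  have the\<pi>: "(THE \<pi>. stationary V E \<alpha> \<pi>) = \<pi>" using st\<pi> u\<pi> by blast
  have pm: "map_pmf (map proj) \<mu> = \<pi>" using u\<pi> l.stat_proj[OF st\<mu>] by blast
  have "mean_items V' E' \<beta> = (\<integral>\<^sup>+ w. ennreal (real (length w)) \<partial>measure_pmf \<mu>)"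
    by (simp add: mean_items_def \<mu>_def)
  also have "... = (\<integral>\<^sup>+ w. ennreal (real (length w)) \<partial>measure_pmf (map_pmf (map proj) \<mu>))"
    by simp
  also have "... = mean_items V E \<alpha>" by (simp add: mean_items_def pm the\<pi>)
  finally show ?thesis using stab' by (simp add: V'_def E'_def)
qed


theorem mainTheorem13:
  fixes V :: "'a set" and E :: "'a set set" and \<alpha> \<beta> :: "'a pmf" and u v x y z :: 'a
  assumes model: "matching_model V E \<alpha>"
    and uv: "u \<in> V" "v \<in> V" "u \<noteq> v" "{u, v} \<notin> E"
    and stab: "stable V E \<alpha>" "stable V (insert {u, v} E) \<alpha>"
    and braess: "mean_items V E \<alpha> < mean_items V (insert {u, v} E) \<alpha>"
    and x: "x \<in> V" "x \<noteq> u" "x \<noteq> v"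
    and yz: "y \<notin> V" "z \<notin> V" "y \<noteq> z"
    and beta_supp: "set_pmf \<beta> = decomp_V V x y z"
    and beta_yz: "pmf \<beta> y > 0" "pmf \<beta> z > 0" "pmf \<beta> y + pmf \<beta> z = pmf \<alpha> x"
    and beta_other: "\<And>i. i \<in> V \<Longrightarrow> i \<noteq> x \<Longrightarrow> pmf \<beta> i = pmf \<alpha> i"
  shows "stable (decomp_V V x y z) (decomp_E E x y z) \<beta>
       \<and> stable (decomp_V V x y z) (insert {u, v} (decomp_E E x y z)) \<beta>
       \<and> mean_items (decomp_V V x y z) (decomp_E E x y z) \<beta>
           < mean_items (decomp_V V x y z) (insert {u, v} (decomp_E E x y z)) \<beta>"
proof -
  have ux: "u \<noteq> x" using x by blast
  have A: "stable (decomp_V V x y z) (decomp_E E x y z) \<beta> \<and>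
     mean_items (decomp_V V x y z) (decomp_E E x y z) \<beta> = mean_items V E \<alpha>"
    by (rule decomp_main[OF stab(1) x(1) uv(1) ux yz beta_supp beta_yz beta_other])
  have B: "stable (decomp_V V x y z) (decomp_E (insert {u, v} E) x y z) \<beta> \<and>
     mean_items (decomp_V V x y z) (decomp_E (insert {u, v} E) x y z) \<beta> = mean_items V (insert {u, v} E) \<alpha>"
    by (rule decomp_main[OF stab(2) x(1) uv(1) ux yz beta_supp beta_yz beta_other])
  have eqE: "decomp_E (insert {u, v} E) x y z = insert {u, v} (decomp_E E x y z)"
    using x unfolding decomp_E_def by (auto simp: doubleton_eq_iff)
  show ?thesis using A B braess unfolding eqE by simp
qed

end
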